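(* Let $n=p_1^{\alpha_1}p_2^{\alpha_2}p_3^{\alpha_3}p_4^{\alpha_4}$ where $p_1,p_2,p_3,p_4$ are distinct primes and $\alpha_i\geq 1$ are integers. Then $\mathbb{AG}(\mathbb{Z}_n)$ is perfect if and only if $\alpha_i=1$ for all $i\in\{1,2,3,4\}$.
   Context: For a commutative ring $R$ with unity, the annihilating-ideal graph $\mathbb{AG}(R)$ is the simple graph whose vertex set is the set of all non-zero ideals of $R$ with non-zero annihilator, two distinct vertices $I,J$ being adjacent if and only if $IJ=0$. A graph $G$ is perfect if $\omega(H)=\chi(H)$ for every induced subgraph $H$ of $G$. *)

theory Defs
  imports "HOL-Algebra.Ideal_Product" "HOL-Number_Theory.Residues"
begin

definition is_clique :: "('a \<Rightarrow> 'a \<Rightarrow> bool) \<Rightarrow> 'a set \<Rightarrow> bool" where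
  "is_clique E K \<longleftrightarrow> (\<forall>x\<in>K. \<forall>y\<in>K. x \<noteq> y \<longrightarrow> E x y)"

definition clique_number :: "('a \<Rightarrow> 'a \<Rightarrow> bool) \<Rightarrow> 'a set \<Rightarrow> nat" where
  "clique_number E S = Max {card K | K. K \<subseteq> S \<and> is_clique E K}"

definition chromatic_number :: "('a \<Rightarrow> 'a \<Rightarrow> bool) \<Rightarrow> 'a set \<Rightarrow> nat" where
  "chromatic_number E S = (LEAST k. \<exists>f :: 'a \<Rightarrow> nat.
      (\<forall>x\<in>S. f x < k) \<and> (\<forall>x\<in>S. \<forall>y\<in>S. x \<noteq> y \<and> E x y \<longrightarrow> f x \<noteq> f y))"

definition perfect_graph :: "'a set \<Rightarrow> ('a \<Rightarrow> 'a \<Rightarrow> bool) \<Rightarrow> bool" where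
  "perfect_graph V E \<longleftrightarrow> (\<forall>S\<subseteq>V. clique_number E S = chromatic_number E S)"

definition annihilator :: "('a, 'b) ring_scheme \<Rightarrow> 'a set \<Rightarrow> 'a set" where
  "annihilator R I = {r \<in> carrier R. \<forall>x\<in>I. r \<otimes>\<^bsub>R\<^esub> x = \<zero>\<^bsub>R\<^esub>}"

definition AG_vertices :: "('a, 'b) ring_scheme \<Rightarrow> 'a set set" where
  "AG_vertices R = {I. ideal I R \<and> I \<noteq> {\<zero>\<^bsub>R\<^esub>} \<and> annihilator R I \<noteq> {\<zero>\<^bsub>R\<^esub>}}"

definition AG_adj :: "('a, 'b) ring_scheme \<Rightarrow> 'a set \<Rightarrow> 'a set \<Rightarrow> bool" where
  "AG_adj R I J \<longleftrightarrow> I \<noteq> J \<and> ideal_prod R I J = {\<zero>\<^bsub>R\<^esub>}"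

definition AG_perfect :: "('a, 'b) ring_scheme \<Rightarrow> bool" where
  "AG_perfect R \<longleftrightarrow> perfect_graph (AG_vertices R) (AG_adj R)"

end

theory Submission
  imports Defs
begin


lemma clique_le_colours:
  assumes "K \<subseteq> S" "is_clique E K" "\<forall>x\<in>S. f x < k"
    "\<forall>x\<in>S. \<forall>y\<in>S. x \<noteq> y \<and> E x y \<longrightarrow> f x \<noteq> f y"
  shows "card K \<le> k"
proof -
  have "inj_on f K" using assms unfolding inj_on_def is_clique_def by blast
  moreover have "f ` K \<subseteq> {..<k}" using assms by auto
  ultimately show ?thesis using card_inj_on_le[of f K "{..<k}"] by auto
qed

lemma clique_chrom_eq:
  assumes fin: "finite S" and K: "K \<subseteq> S" "is_clique E K" "card K = k"
    and f: "\<forall>x\<in>S. f x < k" "\<forall>x\<in>S. \<forall>y\<in>S. x \<noteq> y \<and> E x y \<longrightarrow> f x \<noteq> f y"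
  shows "clique_number E S = chromatic_number E S"
proof -
  have A: "finite {card K | K. K \<subseteq> S \<and> is_clique E K}"
  proof (rule finite_subset)
    show "{card K | K. K \<subseteq> S \<and> is_clique E K} \<subseteq> card ` Pow S" by blast
  qed (simp add: fin)
  have "clique_number E S = k" unfolding clique_number_def
  proof (rule Max_eqI[OF A])
    fix y assume "y \<in> {card K | K. K \<subseteq> S \<and> is_clique E K}"
    then obtain K' where "y = card K'" "K' \<subseteq> S" "is_clique E K'" by blast
    thus "y \<le> k" using clique_le_colours[OF _ _ f] by blast
  next
    show "k \<in> {card K | K. K \<subseteq> S \<and> is_clique E K}" using K by blast
  qed
  moreover have "chromatic_number E S = k" unfolding chromatic_number_def
  proof (rule Least_equality)
    show "\<exists>f :: 'a \<Rightarrow> nat. (\<forall>x\<in>S. f x < k) \<and> (\<forall>x\<in>S. \<forall>y\<in>S. x \<noteq> y \<and> E x y \<longrightarrow> f x \<noteq> f y)"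
      using f by blast
  next
    fix y assume "\<exists>f :: 'a \<Rightarrow> nat. (\<forall>x\<in>S. f x < y) \<and> (\<forall>x\<in>S. \<forall>z\<in>S. x \<noteq> z \<and> E x z \<longrightarrow> f x \<noteq> f z)"
    then obtain g :: "'a \<Rightarrow> nat" where "\<forall>x\<in>S. g x < y" "\<forall>x\<in>S. \<forall>z\<in>S. x \<noteq> z \<and> E x z \<longrightarrow> g x \<noteq> g z" by blast
    from clique_le_colours[OF K(1,2) this] K(3) show "k \<le> y" by simp
  qed
  ultimately show ?thesis by simp
qed

lemma colouring_from_set:
  fixes f :: "'a \<Rightarrow> 'c"
  assumes "finite C" "\<forall>x\<in>S. f x \<in> C" "\<forall>x\<in>S. \<forall>y\<in>S. x \<noteq> y \<and> E x y \<longrightarrow> f x \<noteq> f y"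
  shows "\<exists>g :: 'a \<Rightarrow> nat. (\<forall>x\<in>S. g x < card C) \<and> (\<forall>x\<in>S. \<forall>y\<in>S. x \<noteq> y \<and> E x y \<longrightarrow> g x \<noteq> g y)"
proof -
  obtain h where h: "bij_betw h C {0..<card C}" using ex_bij_betw_finite_nat[OF assms(1)] by blast
  show ?thesis
  proof (intro exI[of _ "h \<circ> f"] conjI ballI)
    fix x assume "x \<in> S" 
    hence "f x \<in> C" using assms(2) by blast
    hence "h (f x) \<in> {0..<card C}" using h bij_betwE by blast
    thus "(h \<circ> f) x < card C" by simp
  next
    fix x y assume "x \<in> S" "y \<in> S" 
    hence "f x \<in> C" "f y \<in> C" using assms(2) by blast+
    moreover have "inj_on h C" using h bij_betw_def by blast
    ultimately show "x \<noteq> y \<and> E x y \<longrightarrow> (h \<circ> f) x \<noteq> (h \<circ> f) y"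
      using assms(3) \<open>x \<in> S\<close> \<open>y \<in> S\<close> unfolding inj_on_def by (metis comp_apply)
  qed
qed

lemma clique_chrom_eq_set:
  fixes f :: "'a \<Rightarrow> 'c"
  assumes fin: "finite S" and K: "K \<subseteq> S" "is_clique E K" "card C \<le> card K"
    and C: "finite C" and f: "\<forall>x\<in>S. f x \<in> C" "\<forall>x\<in>S. \<forall>y\<in>S. x \<noteq> y \<and> E x y \<longrightarrow> f x \<noteq> f y"
  shows "clique_number E S = chromatic_number E S"
proof -
  obtain g :: "'a \<Rightarrow> nat" where g: "\<forall>x\<in>S. g x < card C" "\<forall>x\<in>S. \<forall>y\<in>S. x \<noteq> y \<and> E x y \<longrightarrow> g x \<noteq> g y"
    using colouring_from_set[OF C f] by blast
  have g': "\<forall>x\<in>S. g x < card K" using g K(3) by (meson order_less_le_trans)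
  show ?thesis by (rule clique_chrom_eq[OF fin K(1,2) refl g' g(2)])
qed


lemma abstract_perfect:
  fixes \<psi> :: "'a \<Rightarrow> nat set" and U :: "nat set"
  assumes fin: "finite S" and U: "finite U" "card U \<le> 4"
    and psi: "\<forall>I\<in>S. \<psi> I \<noteq> {} \<and> \<psi> I \<subseteq> U"
    and E: "\<forall>I\<in>S. \<forall>J\<in>S. E I J \<longleftrightarrow> I \<noteq> J \<and> \<psi> I \<inter> \<psi> J = {}"
  shows "clique_number E S = chromatic_number E S"
proof -
  define T where "T = {i. \<exists>I\<in>S. \<psi> I = {i}}"
  have TU: "T \<subseteq> U" using psi unfolding T_def by auto
  have finT: "finite T" using TU U finite_subset by blast
  define r where "r = (\<lambda>i. SOME I. I \<in> S \<and> \<psi> I = {i})"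
  have r: "r i \<in> S \<and> \<psi> (r i) = {i}" if "i \<in> T" for i
  proof -
    from that obtain I where "I \<in> S \<and> \<psi> I = {i}" unfolding T_def by blast
    then show ?thesis unfolding r_def by (rule someI)
  qed
  have rinj: "inj_on r T" unfolding inj_on_def
  proof (intro ballI impI)
    fix i j assume ij: "i \<in> T" "j \<in> T" "r i = r j"
    have "\<psi> (r i) = {i}" "\<psi> (r j) = {j}" using r ij(1,2) by blast+
    hence "{i} = {j}" using ij(3) by argo
    thus "i = j" by blast
  qed
  define K0 where "K0 = r ` T"
  have K0S: "K0 \<subseteq> S" using r K0_def by blast
  have cK0: "card K0 = card T" using rinj K0_def card_image by blast
  have K0cl: "is_clique E K0" unfolding is_clique_def K0_def
  proof (intro ballI impI)
    fix x y assume "x \<in> r ` T" "y \<in> r ` T" "x \<noteq> y"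
    then obtain i j where "i \<in> T" "j \<in> T" "x = r i" "y = r j" by blast
    thus "E x y" using E r \<open>x \<noteq> y\<close> by auto
  qed
  define R where "R = {I\<in>S. \<psi> I \<inter> T = {}}"
  define ch where "ch = (\<lambda>I. SOME i. i \<in> \<psi> I \<inter> T)"
  have ch: "ch I \<in> \<psi> I \<inter> T" if "I \<in> S" "I \<notin> R" for I
  proof -
    from that obtain i where "i \<in> \<psi> I \<inter> T" unfolding R_def by blast
    then show ?thesis unfolding ch_def by (rule someI)
  qed
  show ?thesis
  proof (cases "R = {}")
    case True
    show ?thesis
    proof (rule clique_chrom_eq_set[OF fin K0S K0cl _ finT, of ch])
      show "card T \<le> card K0" using cK0 by simp
      show "\<forall>x\<in>S. ch x \<in> T"
      proof
        fix x assume x: "x \<in> S"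
        have "x \<notin> R" using True by blast
        thus "ch x \<in> T" using ch[OF x] by blast
      qed
      show "\<forall>x\<in>S. \<forall>y\<in>S. x \<noteq> y \<and> E x y \<longrightarrow> ch x \<noteq> ch y"
      proof (intro ballI impI)
        fix x y assume xy: "x \<in> S" "y \<in> S" "x \<noteq> y \<and> E x y"
        hence d: "\<psi> x \<inter> \<psi> y = {}" using E by blast
        have xr: "x \<notin> R" "y \<notin> R" using True by auto
        have a: "ch x \<in> \<psi> x" "ch y \<in> \<psi> y" using ch[OF xy(1) xr(1)] ch[OF xy(2) xr(2)] by auto
        show "ch x \<noteq> ch y"
        proof
          assume "ch x = ch y"
          with a d show False by auto
        qed
      qed
    qed
  next
    case False
    show ?thesis
    proof (cases "\<forall>J1\<in>R. \<forall>J2\<in>R. \<not> E J1 J2")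
      case True
      obtain J where J: "J \<in> R" using False by blast
      define K where "K = insert J K0"
      have JK0: "J \<notin> K0"
      proof
        assume "J \<in> K0"
        then obtain i where "i \<in> T" "J = r i" unfolding K0_def by blast
        thus False using r J unfolding R_def by auto
      qed
      have KS: "K \<subseteq> S" using K0S J unfolding K_def R_def by blast
      have cK: "card K = card T + 1" using JK0 cK0 K_def finT K0_def by simp
      have Kcl: "is_clique E K" unfolding is_clique_def K_def
      proof (intro ballI impI)
        fix x y assume xy: "x \<in> insert J K0" "y \<in> insert J K0" "x \<noteq> y"
        have JE: "E J (r i) \<and> E (r i) J" if "i \<in> T" for i
        proof -
          have "J \<noteq> r i" using JK0 that K0_def by blast
          moreover have "\<psi> J \<inter> \<psi> (r i) = {}" using r[OF that] J that unfolding R_def by auto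
          ultimately show ?thesis using E r[OF that] J unfolding R_def by auto
        qed
        show "E x y"
        proof (cases "x = J")
          case True
          then have "y \<in> K0" using xy by blast
          thus ?thesis using JE True K0_def by blast
        next
          case False
          hence x: "x \<in> K0" using xy by blast
          show ?thesis
          proof (cases "y = J")
            case True thus ?thesis using JE x K0_def by blast
          next
            case False thus ?thesis using xy x K0cl unfolding is_clique_def by blast
          qed
        qed
      qed
      define f where "f = (\<lambda>I. if I \<in> R then None else Some (ch I))"
      show ?thesis
      proof (rule clique_chrom_eq_set[OF fin KS Kcl _ _, of "insert None (Some ` T)" f])
        show "card (insert None (Some ` T)) \<le> card K" using cK finT
          by (simp add: card_image)
        show "finite (insert None (Some ` T))" using finT by simp
        show "\<forall>x\<in>S. f x \<in> insert None (Some ` T)" using ch unfolding f_def by auto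
        show "\<forall>x\<in>S. \<forall>y\<in>S. x \<noteq> y \<and> E x y \<longrightarrow> f x \<noteq> f y"
        proof (intro ballI impI)
          fix x y assume xy: "x \<in> S" "y \<in> S" "x \<noteq> y \<and> E x y"
          hence d: "\<psi> x \<inter> \<psi> y = {}" using E by blast
          show "f x \<noteq> f y"
          proof (cases "x \<in> R")
            case True
            hence "y \<notin> R" using \<open>\<forall>J1\<in>R. \<forall>J2\<in>R. \<not> E J1 J2\<close> xy by blast
            thus ?thesis using True f_def by simp
          next
            case False
            show ?thesis
            proof (cases "y \<in> R")
              case True thus ?thesis using False f_def by simp
            next
              case False2: False
              thus ?thesis using ch[OF xy(1) False] ch[OF xy(2) False2] d False f_def by auto
            qed
          qed
        qed
      qed
    next
      case False
      then obtain J1 J2 where J: "J1 \<in> R" "J2 \<in> R" "E J1 J2" by blast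
      have J12: "J1 \<noteq> J2" "\<psi> J1 \<inter> \<psi> J2 = {}" using J E unfolding R_def by auto
      have fpsi: "finite (\<psi> I)" if "I \<in> S" for I
      proof -
        have "\<psi> I \<subseteq> U" using psi that by blast
        thus ?thesis using finite_subset U(1) by blast
      qed
      have c2: "2 \<le> card (\<psi> I)" if "I \<in> S" "\<psi> I \<inter> T = {}" for I
      proof (rule ccontr)
        assume "\<not> 2 \<le> card (\<psi> I)"
        moreover have "card (\<psi> I) \<noteq> 0" using fpsi[OF that(1)] psi that by auto
        ultimately have "card (\<psi> I) = 1" by simp
        then obtain i where "\<psi> I = {i}" using card_1_singletonE by blast
        hence "i \<in> T" using that unfolding T_def by blast
        thus False using that \<open>\<psi> I = {i}\<close> by blast
      qed
      have "card (\<psi> J1 \<union> \<psi> J2) = card (\<psi> J1) + card (\<psi> J2)"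
        using J12 fpsi J unfolding R_def by (simp add: card_Un_disjoint)
      also have "\<dots> \<ge> 4"
      proof -
        have "J1 \<in> S" "\<psi> J1 \<inter> T = {}" "J2 \<in> S" "\<psi> J2 \<inter> T = {}" using J unfolding R_def by auto
        hence "2 \<le> card (\<psi> J1)" "2 \<le> card (\<psi> J2)" using c2 by presburger+
        thus ?thesis by linarith
      qed
      finally have c4: "4 \<le> card (\<psi> J1 \<union> \<psi> J2)" .
      have "\<psi> J1 \<union> \<psi> J2 \<subseteq> U - T" using J psi unfolding R_def by blast
      hence "card (\<psi> J1 \<union> \<psi> J2) \<le> card (U - T)" using U(1) card_mono by (metis finite_Diff)
      also have "\<dots> = card U - card T" using TU finT by (simp add: card_Diff_subset)
      finally have "card T = 0" using c4 U by linarith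
      hence T0: "T = {}" using finT by simp
      have c2': "2 \<le> card (\<psi> I)" if "I \<in> S" for I using c2[OF that] T0 by blast
      obtain a where a: "a \<in> \<psi> J1" using psi J unfolding R_def by blast
      define f where "f = (\<lambda>I. a \<in> \<psi> I)"
      show ?thesis
      proof (rule clique_chrom_eq_set[OF fin _ _ _ _, of "{J1, J2}" E "UNIV :: bool set" f])
        show "{J1, J2} \<subseteq> S" using J R_def by blast
        show "is_clique E {J1, J2}" unfolding is_clique_def using J E J12 R_def by auto
        show "card (UNIV :: bool set) \<le> card {J1, J2}" using J12 by simp
        show "finite (UNIV :: bool set)" by simp
        show "\<forall>x\<in>S. f x \<in> UNIV" by simp
        show "\<forall>x\<in>S. \<forall>y\<in>S. x \<noteq> y \<and> E x y \<longrightarrow> f x \<noteq> f y"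
        proof (intro ballI impI)
          fix x y assume xy: "x \<in> S" "y \<in> S" "x \<noteq> y \<and> E x y"
          hence d: "\<psi> x \<inter> \<psi> y = {}" using E by blast
          show "f x \<noteq> f y"
          proof
            assume "f x = f y"
            show False
            proof (cases "a \<in> \<psi> x")
              case True thus False using \<open>f x = f y\<close> d f_def by auto
            next
              case False
              hence na: "a \<notin> \<psi> y" using \<open>f x = f y\<close> f_def by auto
              have "\<psi> x \<union> \<psi> y \<subseteq> U - {a}" using psi xy False na by blast
              hence "card (\<psi> x \<union> \<psi> y) \<le> card (U - {a})" using U(1) card_mono by (metis finite_Diff)
              also have "\<dots> \<le> 3"
              proof -
                have "a \<in> U" using a psi J unfolding R_def by blast
                hence "card (U - {a}) = card U - 1" using U(1) by simp
                thus ?thesis using U(2) by linarith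
              qed
              finally have "card (\<psi> x \<union> \<psi> y) \<le> 3" .
              moreover have "card (\<psi> x \<union> \<psi> y) = card (\<psi> x) + card (\<psi> y)"
                using d fpsi xy by (simp add: card_Un_disjoint)
              ultimately show False using c2'[OF xy(1)] c2'[OF xy(2)] by linarith
            qed
          qed
        qed
      qed
    qed
  qed
qed


lemma res_cring: "1 < (N::int) \<Longrightarrow> cring (residue_ring N)"
  using residues.cring[of N] residues_def by blast

lemma res_simps:
  "carrier (residue_ring N) = {0..N - 1}"
  "\<zero>\<^bsub>residue_ring N\<^esub> = 0"
  "x \<otimes>\<^bsub>residue_ring N\<^esub> y = (x * y) mod N"
  "x \<oplus>\<^bsub>residue_ring N\<^esub> y = (x + y) mod N"
  by (simp_all add: residue_ring_def)

lemma ideal_zero_mem: "ideal I (residue_ring N) \<Longrightarrow> 0 \<in> I"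
  using additive_subgroup.zero_closed[OF ideal.axioms(1)] res_simps(2) by metis

lemma ideal_carr: "ideal I (residue_ring N) \<Longrightarrow> x \<in> I \<Longrightarrow> 0 \<le> x \<and> x < N"
  using ideal.Icarr[of I "residue_ring N" x] res_simps(1) by force

lemma prod_zero_iff:
  assumes "ideal I (residue_ring N)" "ideal J (residue_ring N)"
  shows "ideal_prod (residue_ring N) I J = {0} \<longleftrightarrow> (\<forall>x\<in>I. \<forall>y\<in>J. (x * y) mod N = 0)"
proof
  assume h: "ideal_prod (residue_ring N) I J = {0}"
  show "\<forall>x\<in>I. \<forall>y\<in>J. (x * y) mod N = 0"
  proof (intro ballI)
    fix x y assume "x \<in> I" "y \<in> J"
    hence "x \<otimes>\<^bsub>residue_ring N\<^esub> y \<in> ideal_prod (residue_ring N) I J" by (rule ideal_prod.prod)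
    thus "(x * y) mod N = 0" using h res_simps(3) by simp
  qed
next
  assume h: "\<forall>x\<in>I. \<forall>y\<in>J. (x * y) mod N = 0"
  have "s = 0" if "s \<in> ideal_prod (residue_ring N) I J" for s
    using that
  proof (induct s rule: ideal_prod.induct)
    case (prod i j) thus ?case using h res_simps(3) by simp
  next
    case (sum s1 s2) thus ?case using res_simps(4) by simp
  qed
  moreover have "0 \<in> ideal_prod (residue_ring N) I J"
  proof -
    have "0 \<otimes>\<^bsub>residue_ring N\<^esub> 0 \<in> ideal_prod (residue_ring N) I J"
      using ideal_zero_mem[OF assms(1)] ideal_zero_mem[OF assms(2)] by (rule ideal_prod.prod)
    thus ?thesis using res_simps(3) by simp
  qed
  ultimately show "ideal_prod (residue_ring N) I J = {0}" by blast
qed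


lemma set14: "{1..4::nat} = {1,2,3,4}" by auto

lemma dvd4:
  fixes p :: "nat \<Rightarrow> nat" and X :: int
  assumes pr: "\<forall>i\<in>{1..4}. prime (p i)" and inj: "inj_on p {1..4}"
  shows "int (\<Prod>i\<in>{1..4}. p i) dvd X \<longleftrightarrow> (\<forall>i\<in>{1..4}. int (p i) dvd X)"
proof
  assume h: "int (\<Prod>i\<in>{1..4}. p i) dvd X"
  show "\<forall>i\<in>{1..4}. int (p i) dvd X"
  proof
    fix i :: nat assume "i \<in> {1..4}"
    hence "p i dvd (\<Prod>i\<in>{1..4}. p i)" by (intro dvd_prodI) auto
    hence "int (p i) dvd int (\<Prod>i\<in>{1..4}. p i)" by (simp only: int_dvd_int_iff)
    thus "int (p i) dvd X" using h dvd_trans by blast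
  qed
next
  assume h: "\<forall>i\<in>{1..4}. int (p i) dvd X"
  have e: "int (\<Prod>i\<in>{1..4}. p i) = int (p 1) * int (p 2) * int (p 3) * int (p 4)"
    unfolding set14 by (simp add: mult.assoc)
  have P: "prime (int (p i))" if "i \<in> {1..4}" for i using pr that by simp
  have D: "int (p i) \<noteq> int (p j)" if "i \<in> {1..4}" "j \<in> {1..4}" "i \<noteq> j" for i j
    using inj that inj_on_contraD by fastforce
  have C: "coprime (int (p i)) (int (p j))" if "i \<in> {1..4}" "j \<in> {1..4}" "i \<noteq> j" for i j
    using primes_coprime[OF P[OF that(1)] P[OF that(2)] D[OF that]] .
  have d: "int (p i) dvd X" if "i \<in> {1..4}" for i using h that by blast
  have d12: "int (p 1) * int (p 2) dvd X"
    by (rule divides_mult[OF d d C]) auto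
  have c3: "coprime (int (p 1) * int (p 2)) (int (p 3))"
    using C[of 1 3] C[of 2 3] by (simp only: coprime_mult_left_iff) simp
  have d123: "int (p 1) * int (p 2) * int (p 3) dvd X"
    by (rule divides_mult[OF d12 d c3]) simp
  have c4: "coprime (int (p 1) * int (p 2) * int (p 3)) (int (p 4))"
    using C[of 1 4] C[of 2 4] C[of 3 4] by (simp only: coprime_mult_left_iff) simp
  have "int (p 1) * int (p 2) * int (p 3) * int (p 4) dvd X"
    by (rule divides_mult[OF d123 d c4]) simp
  thus "int (\<Prod>i\<in>{1..4}. p i) dvd X" using e by simp
qed


lemma perfect_dir:
  fixes p :: "nat \<Rightarrow> nat" and n :: nat
  assumes pr: "\<forall>i\<in>{1..4}. prime (p i)" and inj: "inj_on p {1..4}"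
    and n: "n = (\<Prod>i\<in>{1..4}. p i)"
  shows "AG_perfect (residue_ring (int n))"
proof -
  define N where "N = int n"
  have P: "prime (int (p i))" if "i \<in> {1..4}" for i using pr that by simp
  have npos: "0 < n" unfolding n using pr by (simp add: prime_gt_0_nat)
  have "p 1 dvd n" unfolding n by (intro dvd_prodI) auto
  moreover have "p 1 \<noteq> 1"
  proof -
    have "prime (p 1)" using pr by simp
    thus ?thesis by (metis not_prime_1)
  qed
  ultimately have "n \<noteq> 1" by auto
  hence N1: "1 < N" using npos N_def by simp
  have dvdN: "N dvd X \<longleftrightarrow> (\<forall>i\<in>{1..4}. int (p i) dvd X)" for X
    unfolding N_def n by (rule dvd4[OF pr inj])
  define \<psi> where "\<psi> = (\<lambda>I. {i\<in>{1..4::nat}. \<exists>x\<in>I. \<not> int (p i) dvd x})"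
  show ?thesis unfolding AG_perfect_def perfect_graph_def N_def[symmetric]
  proof (intro allI impI)
    fix S assume S: "S \<subseteq> AG_vertices (residue_ring N)"
    have V: "ideal I (residue_ring N) \<and> I \<noteq> {0}" if "I \<in> S" for I
      using S that unfolding AG_vertices_def res_simps by blast
    have finS: "finite S"
    proof (rule finite_subset)
      show "S \<subseteq> Pow {0..N-1}"
      proof
        fix I assume "I \<in> S"
        hence "ideal I (residue_ring N)" using V by blast
        thus "I \<in> Pow {0..N-1}" using ideal_carr by fastforce
      qed
    qed simp
    show "clique_number (AG_adj (residue_ring N)) S = chromatic_number (AG_adj (residue_ring N)) S"
    proof (rule abstract_perfect[OF finS, of "{1..4}" \<psi>])
      show "finite {1..4::nat}" by simp
      show "card {1..4::nat} \<le> 4" by simp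
      show "\<forall>I\<in>S. \<psi> I \<noteq> {} \<and> \<psi> I \<subseteq> {1..4}"
      proof
        fix I assume I: "I \<in> S"
        have id: "ideal I (residue_ring N)" and nz: "I \<noteq> {0}" using V[OF I] by auto
        obtain x where x: "x \<in> I" "x \<noteq> 0" using nz ideal_zero_mem[OF id] by blast
        have xr: "0 \<le> x" "x < N" using ideal_carr[OF id x(1)] by auto
        have "\<psi> I \<noteq> {}"
        proof
          assume "\<psi> I = {}"
          hence "\<forall>i\<in>{1..4}. int (p i) dvd x" using x(1) unfolding \<psi>_def by blast
          hence "N dvd x" using dvdN by blast
          hence "x mod N = 0" by simp
          moreover have "x mod N = x" using xr by simp
          ultimately show False using x(2) by simp
        qed
        thus "\<psi> I \<noteq> {} \<and> \<psi> I \<subseteq> {1..4}" unfolding \<psi>_def by blast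
      qed
      show "\<forall>I\<in>S. \<forall>J\<in>S. AG_adj (residue_ring N) I J \<longleftrightarrow> I \<noteq> J \<and> \<psi> I \<inter> \<psi> J = {}"
      proof (intro ballI)
        fix I J assume I: "I \<in> S" and J: "J \<in> S"
        have iI: "ideal I (residue_ring N)" and iJ: "ideal J (residue_ring N)" using V I J by auto
        have m: "(x * y) mod N = 0 \<longleftrightarrow> (\<forall>i\<in>{1..4}. int (p i) dvd x \<or> int (p i) dvd y)" for x y
        proof -
          have "(x * y) mod N = 0 \<longleftrightarrow> N dvd x * y" by (simp add: dvd_eq_mod_eq_0)
          also have "\<dots> \<longleftrightarrow> (\<forall>i\<in>{1..4}. int (p i) dvd x * y)" by (rule dvdN)
          also have "\<dots> \<longleftrightarrow> (\<forall>i\<in>{1..4}. int (p i) dvd x \<or> int (p i) dvd y)"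
            using P prime_dvd_mult_iff by blast
          finally show ?thesis .
        qed
        have "(\<forall>x\<in>I. \<forall>y\<in>J. (x * y) mod N = 0) \<longleftrightarrow> \<psi> I \<inter> \<psi> J = {}"
          unfolding m \<psi>_def by blast
        thus "AG_adj (residue_ring N) I J \<longleftrightarrow> I \<noteq> J \<and> \<psi> I \<inter> \<psi> J = {}"
          unfolding AG_adj_def res_simps prod_zero_iff[OF iI iJ] by blast
      qed
    qed
  qed
qed



definition c5 :: "nat \<Rightarrow> nat \<Rightarrow> bool" where
  "c5 i j \<longleftrightarrow> j = Suc i mod 5 \<or> i = Suc j mod 5"

lemma lt5: "i < (5::nat) \<longleftrightarrow> i = 0 \<or> i = 1 \<or> i = 2 \<or> i = 3 \<or> i = 4" by auto

lemma c5_no_triangle: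
  assumes "i < 5" "j < 5" "k < 5" "c5 i j" "c5 j k" "c5 i k"
  shows False
  using assms unfolding lt5 c5_def by auto

lemma c5_irrefl: "\<not> c5 i i"
proof
  assume "c5 i i"
  hence h: "i = Suc i mod 5" unfolding c5_def by blast
  hence "i < 5" by (metis mod_less_divisor zero_less_numeral)
  thus False using h unfolding lt5 by auto
qed

lemma odd5:
  fixes a b c d e :: nat
  assumes "a \<noteq> b" "b \<noteq> c" "c \<noteq> d" "d \<noteq> e" "e \<noteq> a" "a < 2" "b < 2" "c < 2" "d < 2" "e < 2"
  shows False
proof -
  have l2: "x < 2 \<longleftrightarrow> x = 0 \<or> x = 1" for x :: nat by auto
  show False using assms unfolding l2 by auto
qed

lemma three_elems:
  assumes "3 \<le> card K"
  obtains x y z where "x \<in> K" "y \<in> K" "z \<in> K" "x \<noteq> y" "y \<noteq> z" "x \<noteq> z"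
proof -
  have "Suc (Suc (Suc 0)) \<le> card K" using assms by simp
  from card_le_Suc_iff[THEN iffD1, OF this]
  obtain x B where B: "K = insert x B" "x \<notin> B" "Suc (Suc 0) \<le> card B" "finite B"
    by blast
  from card_le_Suc_iff[THEN iffD1, OF B(3)]
  obtain y C where C: "B = insert y C" "y \<notin> C" "Suc 0 \<le> card C" "finite C"
    by blast
  from card_le_Suc_iff[THEN iffD1, OF C(3)]
  obtain z D where D: "C = insert z D" "z \<notin> D"
    by blast
  show ?thesis
  proof (rule that[of x y z])
    show "x \<in> K" "y \<in> K" "z \<in> K" using B(1) C(1) D(1) by simp_all
    show "x \<noteq> y" using B(1,2) C(1) by auto
    show "y \<noteq> z" using C(1,2) D(1) by auto
    show "x \<noteq> z" using B(1,2) C(1) D(1) by auto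
  qed
qed

lemma C5_lemma:
  fixes v :: "nat \<Rightarrow> 'a" and E :: "'a \<Rightarrow> 'a \<Rightarrow> bool"
  assumes E: "\<forall>i<5. \<forall>j<5. E (v i) (v j) \<longleftrightarrow> c5 i j"
  shows "clique_number E (v ` {..<5}) \<noteq> chromatic_number E (v ` {..<5})"
proof -
  let ?S = "v ` {..<5}"
  have fin: "finite {card K | K. K \<subseteq> ?S \<and> is_clique E K}"
  proof (rule finite_subset)
    show "{card K | K. K \<subseteq> ?S \<and> is_clique E K} \<subseteq> card ` Pow ?S" by blast
  qed simp
  have "clique_number E ?S \<le> 2" unfolding clique_number_def
  proof (rule Max.boundedI[OF fin])
    have "is_clique E {}" unfolding is_clique_def by simp
    hence "card {} \<in> {card K | K. K \<subseteq> ?S \<and> is_clique E K}" by (intro CollectI exI[of _ "{}"]) simp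
    thus "{card K | K. K \<subseteq> ?S \<and> is_clique E K} \<noteq> {}" by blast
  next
    fix m assume "m \<in> {card K | K. K \<subseteq> ?S \<and> is_clique E K}"
    then obtain K where K: "m = card K" "K \<subseteq> ?S" "is_clique E K" by blast
    show "m \<le> 2"
    proof (rule ccontr)
      assume "\<not> m \<le> 2"
      hence "3 \<le> card K" using K by simp
      then obtain x y z where xyz: "x \<in> K" "y \<in> K" "z \<in> K" "x \<noteq> y" "y \<noteq> z" "x \<noteq> z"
        by (rule three_elems)
      have "x \<in> ?S" "y \<in> ?S" "z \<in> ?S" using xyz(1-3) K(2) by (simp_all add: subset_iff)
      then obtain i j k where ijk: "i < 5" "j < 5" "k < 5" "x = v i" "y = v j" "z = v k"
        by (auto elim!: imageE)
      have "E x y" "E y z" "E x z" using K(3) xyz unfolding is_clique_def by blast+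
      hence "c5 i j" "c5 j k" "c5 i k" using E[rule_format, OF ijk(1) ijk(2)] E[rule_format, OF ijk(2) ijk(3)]
          E[rule_format, OF ijk(1) ijk(3)] ijk(4-6) by simp_all
      thus False using c5_no_triangle ijk by blast
    qed
  qed
  moreover have "chromatic_number E ?S = 3" unfolding chromatic_number_def
  proof (rule Least_equality)
    define col :: "nat \<Rightarrow> nat" where "col i = (if i = 4 then 2 else i mod 2)" for i
    define f where "f x = col (SOME i. i < 5 \<and> v i = x)" for x
    show "\<exists>f :: 'a \<Rightarrow> nat. (\<forall>x\<in>?S. f x < 3) \<and> (\<forall>x\<in>?S. \<forall>y\<in>?S. x \<noteq> y \<and> E x y \<longrightarrow> f x \<noteq> f y)"
    proof (intro exI[of _ f] conjI ballI impI)
      fix x assume "x \<in> ?S"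
      have colb: "col k < 3" for k unfolding col_def using mod_less_divisor[of 2 k] by auto
      show "f x < 3" unfolding f_def by (rule colb)
    next
      fix x y assume x: "x \<in> ?S" and y: "y \<in> ?S" and xy: "x \<noteq> y \<and> E x y"
      define i where "i = (SOME i. i < 5 \<and> v i = x)"
      define j where "j = (SOME i. i < 5 \<and> v i = y)"
      obtain i0 where "i0 \<in> {..<5}" "x = v i0" using x by (rule imageE)
      hence "i0 < 5 \<and> v i0 = x" by simp
      hence i: "i < 5 \<and> v i = x" unfolding i_def by (rule someI)
      obtain j0 where "j0 \<in> {..<5}" "y = v j0" using y by (rule imageE)
      hence "j0 < 5 \<and> v j0 = y" by simp
      hence j: "j < 5 \<and> v j = y" unfolding j_def by (rule someI)
      have "E (v i) (v j)" using i j xy by simp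
      hence "c5 i j" using E[rule_format, of i j] i j by simp
      hence "col i \<noteq> col j" using i j unfolding c5_def col_def lt5 by auto
      thus "f x \<noteq> f y" unfolding f_def i_def[symmetric] j_def[symmetric] .
    qed
  next
    fix y assume "\<exists>f :: 'a \<Rightarrow> nat. (\<forall>x\<in>?S. f x < y) \<and> (\<forall>x\<in>?S. \<forall>z\<in>?S. x \<noteq> z \<and> E x z \<longrightarrow> f x \<noteq> f z)"
    then obtain g :: "'a \<Rightarrow> nat" where g: "\<forall>x\<in>?S. g x < y" "\<forall>x\<in>?S. \<forall>z\<in>?S. x \<noteq> z \<and> E x z \<longrightarrow> g x \<noteq> g z"
      by blast
    have ne0: "g (v i) \<noteq> g (v (Suc i mod 5))" if "i < 5" for i
    proof -
      have c: "c5 i (Suc i mod 5)" unfolding c5_def by simp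
      have l: "Suc i mod 5 < 5" by simp
      have "E (v i) (v (Suc i mod 5))" using E that l c by blast
      moreover have "v i \<noteq> v (Suc i mod 5)"
      proof
        assume "v i = v (Suc i mod 5)"
        hence "E (v i) (v i)" using \<open>E (v i) (v (Suc i mod 5))\<close> by simp
        thus False using E that c5_irrefl by blast
      qed
      ultimately show ?thesis using g(2) that l by blast
    qed
    have ne: "g (v i) \<noteq> g (v j)" if "i < 5" "j = Suc i mod 5" for i j using ne0 that by simp
    have lt: "g (v i) < y" if "i < 5" for i using g(1) that by blast
    show "3 \<le> y"
    proof (rule ccontr)
      assume "\<not> 3 \<le> y"
      hence "y \<le> 2" by simp
      have "g (v 0) \<noteq> g (v 1)" "g (v 1) \<noteq> g (v 2)" "g (v 2) \<noteq> g (v 3)" "g (v 3) \<noteq> g (v 4)"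
        "g (v 4) \<noteq> g (v 0)" using ne[of 0 1] ne[of 1 2] ne[of 2 3] ne[of 3 4] ne[of 4 0] by simp_all
      moreover have "g (v 0) < 2" "g (v 1) < 2" "g (v 2) < 2" "g (v 3) < 2" "g (v 4) < 2"
        using lt[of 0] lt[of 1] lt[of 2] lt[of 3] lt[of 4] \<open>y \<le> 2\<close> by simp_all
      ultimately show False using odd5 by blast
    qed
  qed
  ultimately show ?thesis by simp
qed



lemma mdp: "prime (p::int) \<Longrightarrow> prime q \<Longrightarrow> p \<noteq> q \<Longrightarrow> multiplicity p q = 0"
  using multiplicity_distinct_prime_power[of p q 1] by simp

lemma negdiv: "prime (l::int) \<Longrightarrow> X \<noteq> 0 \<Longrightarrow> multiplicity l X < multiplicity l N \<Longrightarrow> \<not> N dvd X"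
  using dvd_imp_multiplicity_le[of N X l] by linarith

lemma dvd_facts:
  fixes p q r s :: int and a b c d e :: nat
  assumes pr: "prime p" "prime q" "prime r" "prime s"
    and ne: "p \<noteq> q" "p \<noteq> r" "p \<noteq> s" "q \<noteq> r" "q \<noteq> s" "r \<noteq> s"
    and a: "a = Suc e" "1 \<le> e" and bcd: "1 \<le> b" "1 \<le> c" "1 \<le> d"
    and N: "N = p^a * q^b * r^c * s^d"
    and dd: "d0 = q^b * r^c * s^d" "d1 = p^a * s^d" "d2 = p * q^b * r^c" "d3 = p^e * r^c * s^d" "d4 = p^a * q^b"
  shows "N dvd d0 * d1" "N dvd d1 * d2" "N dvd d2 * d3" "N dvd d3 * d4" "N dvd d4 * d0"
    "\<not> N dvd d0 * d0" "\<not> N dvd d1 * d1" "\<not> N dvd d2 * d2" "\<not> N dvd d3 * d3" "\<not> N dvd d4 * d4"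
    "\<not> N dvd d0 * d2" "\<not> N dvd d0 * d3" "\<not> N dvd d1 * d3" "\<not> N dvd d1 * d4" "\<not> N dvd d2 * d4"
proof -
  have nz: "p \<noteq> 0" "q \<noteq> 0" "r \<noteq> 0" "s \<noteq> 0" using pr by auto
  have pe: "prime_elem p" "prime_elem q" "prime_elem r" "prime_elem s" using pr prime_imp_prime_elem by blast+
  have m0: "multiplicity p q = 0" "multiplicity p r = 0" "multiplicity p s = 0"
    "multiplicity q p = 0" "multiplicity q r = 0" "multiplicity q s = 0"
    "multiplicity r p = 0" "multiplicity r q = 0" "multiplicity r s = 0"
    "multiplicity s p = 0" "multiplicity s q = 0" "multiplicity s r = 0"
    using mdp pr ne by (metis)+
  have m1: "multiplicity p p = 1" "multiplicity q q = 1" "multiplicity r r = 1" "multiplicity s s = 1"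
    using multiplicity_prime_power[of _ 1] pe by simp_all
  have ab: "\<bar>p\<bar> = p" "\<bar>q\<bar> = q" "\<bar>r\<bar> = r" "\<bar>s\<bar> = s" using pr by (simp_all add: prime_ge_0_int)
  note ms = ab pr prime_elem_multiplicity_mult_distrib prime_elem_multiplicity_power_distrib m0 m1 pe nz
  show "N dvd d0 * d1" unfolding N dd by (rule dvdI[of _ _ "s^d"]) (simp add: ac_simps)
  show "N dvd d1 * d2" unfolding N dd by (rule dvdI[of _ _ "p"]) (simp add: ac_simps)
  show "N dvd d2 * d3" unfolding N dd a by (rule dvdI[of _ _ "r^c"]) (simp add: ac_simps)
  show "N dvd d3 * d4" unfolding N dd by (rule dvdI[of _ _ "p^e"]) (simp add: ac_simps)
  show "N dvd d4 * d0" unfolding N dd by (rule dvdI[of _ _ "q^b"]) (simp add: ac_simps)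
  show "\<not> N dvd d0 * d0" unfolding N dd by (rule negdiv[OF pr(1)]) (use a in \<open>simp_all add: ms\<close>)
  show "\<not> N dvd d1 * d1" unfolding N dd by (rule negdiv[OF pr(2)]) (use bcd in \<open>simp_all add: ms\<close>)
  show "\<not> N dvd d2 * d2" unfolding N dd by (rule negdiv[OF pr(4)]) (use bcd in \<open>simp_all add: ms\<close>)
  show "\<not> N dvd d3 * d3" unfolding N dd by (rule negdiv[OF pr(2)]) (use bcd in \<open>simp_all add: ms\<close>)
  show "\<not> N dvd d4 * d4" unfolding N dd by (rule negdiv[OF pr(3)]) (use bcd in \<open>simp_all add: ms\<close>)
  show "\<not> N dvd d0 * d2" unfolding N dd by (rule negdiv[OF pr(1)]) (use a in \<open>simp_all add: ms\<close>)
  show "\<not> N dvd d0 * d3" unfolding N dd by (rule negdiv[OF pr(1)]) (use a in \<open>simp_all add: ms\<close>)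
  show "\<not> N dvd d1 * d3" unfolding N dd by (rule negdiv[OF pr(2)]) (use bcd in \<open>simp_all add: ms\<close>)
  show "\<not> N dvd d1 * d4" unfolding N dd by (rule negdiv[OF pr(3)]) (use bcd in \<open>simp_all add: ms\<close>)
  show "\<not> N dvd d2 * d4" unfolding N dd by (rule negdiv[OF pr(4)]) (use bcd in \<open>simp_all add: ms\<close>)
qed


definition pid :: "int \<Rightarrow> int \<Rightarrow> int set" where
  "pid N t = {x \<in> {0..N-1}. t dvd x}"

lemma pid_ideal:
  assumes N: "1 < N" and t: "0 < t" "t < N" "t dvd N"
  shows "ideal (pid N t) (residue_ring N)"
proof -
  have cr: "cring (residue_ring N)" using res_cring N by blast
  have tc: "t \<in> carrier (residue_ring N)" using t res_simps(1) by simp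
  have "pid N t = PIdl\<^bsub>residue_ring N\<^esub> t"
  proof
    show "pid N t \<subseteq> PIdl\<^bsub>residue_ring N\<^esub> t"
    proof
      fix y assume "y \<in> pid N t"
      hence y: "0 \<le> y" "y \<le> N - 1" "t dvd y" unfolding pid_def by auto
      obtain k where k: "y = t * k" using y(3) by blast
      have kd: "y div t = k" using k t by simp
      have "y div t \<in> carrier (residue_ring N)"
      proof -
        have "0 \<le> k" using y(1) k t by (simp add: zero_le_mult_iff)
        moreover have "1 * k \<le> t * k" using t \<open>0 \<le> k\<close> by (intro mult_right_mono) simp_all
        ultimately show ?thesis using y k kd res_simps(1) by simp
      qed
      moreover have "y div t \<otimes>\<^bsub>residue_ring N\<^esub> t = y"
        using y res_simps(3) by simp
      ultimately show "y \<in> PIdl\<^bsub>residue_ring N\<^esub> t" unfolding cgenideal_def by force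
    qed
  next
    show "PIdl\<^bsub>residue_ring N\<^esub> t \<subseteq> pid N t"
    proof
      fix y assume "y \<in> PIdl\<^bsub>residue_ring N\<^esub> t"
      then obtain x where "y = (x * t) mod N" unfolding cgenideal_def res_simps by blast
      moreover have "t dvd (x * t) mod N" using t(3) by (simp add: dvd_mod_iff)
      moreover have "0 \<le> (x * t) mod N" "(x * t) mod N \<le> N - 1" using N by simp_all
      ultimately show "y \<in> pid N t" unfolding pid_def by simp
    qed
  qed
  thus ?thesis using cring.cgenideal_ideal[OF cr tc] by simp
qed

lemma pid_vertex:
  assumes N: "1 < N" and t: "1 < t" "t < N" "t dvd N"
  shows "pid N t \<in> AG_vertices (residue_ring N)"
proof -
  have id: "ideal (pid N t) (residue_ring N)" using pid_ideal N t by simp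
  have tin: "t \<in> pid N t" using t unfolding pid_def by simp
  obtain u where u: "N = t * u" using t(3) by blast
  have upos: "0 < u" using u N t zero_less_mult_pos by fastforce
  have "1 * u < t * u" using t upos by (intro mult_strict_right_mono) simp_all
  hence ult: "u < N" using u by simp
  have uann: "u \<in> annihilator (residue_ring N) (pid N t)"
    unfolding annihilator_def res_simps
  proof (intro CollectI conjI ballI)
    show "u \<in> {0..N-1}" using upos ult by simp
    fix x assume "x \<in> pid N t"
    then obtain k where "x = t * k" unfolding pid_def by blast
    hence "u * x = N * k" using u by (simp add: ac_simps)
    thus "(u * x) mod N = 0" by simp
  qed
  show ?thesis unfolding AG_vertices_def res_simps
    using id tin uann upos t by auto
qed

lemma pid_prod:
  assumes N: "1 < N" and t: "0 < t" "t < N" "t dvd N" and t': "0 < t'" "t' < N" "t' dvd N"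
  shows "ideal_prod (residue_ring N) (pid N t) (pid N t') = {0} \<longleftrightarrow> N dvd t * t'"
proof -
  have i1: "ideal (pid N t) (residue_ring N)" using pid_ideal N t by simp
  have i2: "ideal (pid N t') (residue_ring N)" using pid_ideal N t' by simp
  have "(\<forall>x\<in>pid N t. \<forall>y\<in>pid N t'. (x * y) mod N = 0) \<longleftrightarrow> N dvd t * t'"
  proof
    assume "\<forall>x\<in>pid N t. \<forall>y\<in>pid N t'. (x * y) mod N = 0"
    moreover have "t \<in> pid N t" "t' \<in> pid N t'" using t t' unfolding pid_def by auto
    ultimately have "(t * t') mod N = 0" by blast
    thus "N dvd t * t'" by (simp add: dvd_eq_mod_eq_0)
  next
    assume h: "N dvd t * t'"
    show "\<forall>x\<in>pid N t. \<forall>y\<in>pid N t'. (x * y) mod N = 0"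
    proof (intro ballI)
      fix x y assume "x \<in> pid N t" "y \<in> pid N t'"
      hence "t * t' dvd x * y" unfolding pid_def by (simp add: mult_dvd_mono)
      hence "N dvd x * y" using h dvd_trans by blast
      thus "(x * y) mod N = 0" by (simp add: dvd_eq_mod_eq_0)
    qed
  qed
  thus ?thesis using prod_zero_iff[OF i1 i2] by simp
qed


lemma proper_div:
  fixes x m N :: int
  assumes "1 < x" "1 < m" "N = x * m"
  shows "0 < x" "x < N" "x dvd N" "1 < x"
proof -
  show "0 < x" "1 < x" using assms by simp_all
  have "x * 1 < x * m" using assms by (intro mult_strict_left_mono) simp_all
  thus "x < N" using assms by simp
  show "x dvd N" using assms by simp
qed

lemma nonperfect:
  fixes p q r s a b c d :: nat
  assumes pr: "prime p" "prime q" "prime r" "prime s"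
    and ne: "p \<noteq> q" "p \<noteq> r" "p \<noteq> s" "q \<noteq> r" "q \<noteq> s" "r \<noteq> s"
    and a: "2 \<le> a" and bcd: "1 \<le> b" "1 \<le> c" "1 \<le> d"
  shows "\<not> AG_perfect (residue_ring (int (p^a * q^b * r^c * s^d)))"
proof
  define N where "N = int (p^a * q^b * r^c * s^d)"
  assume "AG_perfect (residue_ring (int (p^a * q^b * r^c * s^d)))"
  hence perf: "perfect_graph (AG_vertices (residue_ring N)) (AG_adj (residue_ring N))"
    unfolding AG_perfect_def N_def .
  define e where "e = a - 1"
  have ae: "a = Suc e" "1 \<le> e" using a e_def by simp_all
  define P where "P = int p" define Q where "Q = int q" define R where "R = int r" define S where "S = int s"
  have Neq: "N = P^a * Q^b * R^c * S^d" unfolding N_def P_def Q_def R_def S_def by simp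
  have ipr: "prime P" "prime Q" "prime R" "prime S" unfolding P_def Q_def R_def S_def using pr by simp_all
  have ine: "P \<noteq> Q" "P \<noteq> R" "P \<noteq> S" "Q \<noteq> R" "Q \<noteq> S" "R \<noteq> S"
    unfolding P_def Q_def R_def S_def using ne by simp_all
  define d0 where "d0 = Q^b * R^c * S^d"
  define d1 where "d1 = P^a * S^d"
  define d2 where "d2 = P * Q^b * R^c"
  define d3 where "d3 = P^e * R^c * S^d"
  define d4 where "d4 = P^a * Q^b"
  note F = dvd_facts[OF ipr ine ae bcd Neq d0_def d1_def d2_def d3_def d4_def]
  have Fs: "N dvd d1 * d0" "N dvd d2 * d1" "N dvd d3 * d2" "N dvd d4 * d3" "N dvd d0 * d4"
    "\<not> N dvd d2 * d0" "\<not> N dvd d3 * d0" "\<not> N dvd d3 * d1" "\<not> N dvd d4 * d1" "\<not> N dvd d4 * d2"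
    using F by (simp_all add: mult.commute)
  have g1: "1 < P" "1 < Q" "1 < R" "1 < S" using ipr prime_gt_1_int by blast+
  have gp: "1 < P^a" "1 < Q^b" "1 < R^c" "1 < S^d" "1 < P^e"
    using one_less_power[OF g1(1), of a] one_less_power[OF g1(2), of b] one_less_power[OF g1(3), of c]
      one_less_power[OF g1(4), of d] one_less_power[OF g1(1), of e] a bcd ae(2) by simp_all
  define dd where "dd = [d0, d1, d2, d3, d4]"
  have B: "0 < dd ! i \<and> dd ! i < N \<and> dd ! i dvd N \<and> 1 < dd ! i" if "i < 5" for i
  proof -
    have c0: "N = d0 * P^a" unfolding Neq d0_def by (simp add: ac_simps)
    have c1: "N = d1 * (Q^b * R^c)" unfolding Neq d1_def by (simp add: ac_simps)
    have c2: "N = d2 * (P^e * S^d)" unfolding Neq d2_def ae by (simp add: ac_simps)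
    have c3: "N = d3 * (P * Q^b)" unfolding Neq d3_def ae by (simp add: ac_simps)
    have c4: "N = d4 * (R^c * S^d)" unfolding Neq d4_def by (simp add: ac_simps)
    have h0: "1 < d0" unfolding d0_def using gp by (simp add: less_1_mult)
    have h1: "1 < d1" unfolding d1_def using gp by (simp add: less_1_mult)
    have h2: "1 < d2" unfolding d2_def using gp g1 by (simp add: less_1_mult)
    have h3: "1 < d3" unfolding d3_def using gp by (simp add: less_1_mult)
    have h4: "1 < d4" unfolding d4_def using gp by (simp add: less_1_mult)
    have m1: "1 < Q^b * R^c" "1 < P^e * S^d" "1 < P * Q^b" "1 < R^c * S^d"
      using gp g1 by (simp_all add: less_1_mult)
    note P0 = proper_div[OF h0 gp(1) c0] and P1 = proper_div[OF h1 m1(1) c1]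
      and P2 = proper_div[OF h2 m1(2) c2] and P3 = proper_div[OF h3 m1(3) c3]
      and P4 = proper_div[OF h4 m1(4) c4]
    show ?thesis using that unfolding lt5 by (elim disjE) (simp_all add: dd_def P0 P1 P2 P3 P4)
  qed
  have tab: "N dvd dd ! i * dd ! j \<longleftrightarrow> c5 i j" if "i < 5" "j < 5" for i j
    using that unfolding lt5 by (elim disjE) (simp_all add: dd_def c5_def F Fs)
  define v where "v i = pid N (dd ! i)" for i
  have N1: "1 < N" using B[of 0] by simp
  have Z: "ideal_prod (residue_ring N) (v i) (v j) = {0} \<longleftrightarrow> c5 i j" if "i < 5" "j < 5" for i j
    unfolding v_def using pid_prod[OF N1, of "dd ! i" "dd ! j"] B[OF that(1)] B[OF that(2)] tab[OF that]
    by simp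
  have Eadj: "\<forall>i<5. \<forall>j<5. AG_adj (residue_ring N) (v i) (v j) \<longleftrightarrow> c5 i j"
  proof (intro allI impI)
    fix i j :: nat assume ij: "i < 5" "j < 5"
    show "AG_adj (residue_ring N) (v i) (v j) \<longleftrightarrow> c5 i j"
    proof (cases "c5 i j")
      case True
      have "v i \<noteq> v j"
      proof
        assume "v i = v j"
        hence "ideal_prod (residue_ring N) (v i) (v i) = {0}" using Z[OF ij] True by simp
        thus False using Z[OF ij(1) ij(1)] c5_irrefl by simp
      qed
      thus ?thesis using True Z[OF ij] unfolding AG_adj_def res_simps by simp
    next
      case False
      thus ?thesis using Z[OF ij] unfolding AG_adj_def res_simps by simp
    qed
  qed
  have sub: "v ` {..<5} \<subseteq> AG_vertices (residue_ring N)"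
  proof
    fix x assume "x \<in> v ` {..<5}"
    then obtain i where i: "i < 5" "x = v i" by blast
    show "x \<in> AG_vertices (residue_ring N)" unfolding i(2) v_def
      using pid_vertex[OF N1] B[OF i(1)] by simp
  qed
  have "clique_number (AG_adj (residue_ring N)) (v ` {..<5}) = chromatic_number (AG_adj (residue_ring N)) (v ` {..<5})"
    using perf sub unfolding perfect_graph_def by blast
  thus False using C5_lemma[where v = v and E = "AG_adj (residue_ring N)", OF Eadj] by simp
qed


theorem lemma2:
  fixes p \<alpha> :: "nat \<Rightarrow> nat" and n :: nat
  assumes "\<forall>i\<in>{1..4}. prime (p i)"
    and "inj_on p {1..4}"
    and "\<forall>i\<in>{1..4}. \<alpha> i \<ge> 1"
    and "n = (\<Prod>i\<in>{1..4}. p i ^ \<alpha> i)"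
  shows "AG_perfect (residue_ring (int n)) \<longleftrightarrow> (\<forall>i\<in>{1..4}. \<alpha> i = 1)"
proof
  assume perf: "AG_perfect (residue_ring (int n))"
  show "\<forall>i\<in>{1..4}. \<alpha> i = 1"
  proof (rule ccontr)
    assume "\<not> (\<forall>i\<in>{1..4}. \<alpha> i = 1)"
    then obtain i where i: "i \<in> {1..4}" "\<alpha> i \<noteq> 1" by blast
    have pr: "prime (p 1)" "prime (p 2)" "prime (p 3)" "prime (p 4)" using assms(1) by simp_all
    have D: "p i \<noteq> p j" if "i \<in> {1..4}" "j \<in> {1..4}" "i \<noteq> j" for i j
      using assms(2) that inj_on_contraD by fastforce
    have ne: "p 1 \<noteq> p 2" "p 1 \<noteq> p 3" "p 1 \<noteq> p 4" "p 2 \<noteq> p 3" "p 2 \<noteq> p 4" "p 3 \<noteq> p 4"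
      "p 2 \<noteq> p 1" "p 3 \<noteq> p 1" "p 4 \<noteq> p 1" "p 3 \<noteq> p 2" "p 4 \<noteq> p 2" "p 4 \<noteq> p 3"
      using D by simp_all
    have al: "1 \<le> \<alpha> 1" "1 \<le> \<alpha> 2" "1 \<le> \<alpha> 3" "1 \<le> \<alpha> 4" using assms(3) by simp_all
    have n4: "n = p 1 ^ \<alpha> 1 * p 2 ^ \<alpha> 2 * p 3 ^ \<alpha> 3 * p 4 ^ \<alpha> 4"
      unfolding assms(4) set14 by (simp add: mult.assoc)
    have i2: "2 \<le> \<alpha> i" using i assms(3) by fastforce
    have "i = 1 \<or> i = 2 \<or> i = 3 \<or> i = 4" using i by auto
    thus False
    proof (elim disjE)
      assume "i = 1"
      hence "\<not> AG_perfect (residue_ring (int n))"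
        using nonperfect[OF pr(1) pr(2) pr(3) pr(4) ne(1) ne(2) ne(3) ne(4) ne(5) ne(6) _ al(2) al(3) al(4)] i2 n4
        by simp
      thus False using perf by simp
    next
      assume "i = 2"
      have "n = p 2 ^ \<alpha> 2 * p 1 ^ \<alpha> 1 * p 3 ^ \<alpha> 3 * p 4 ^ \<alpha> 4" using n4 by (simp add: ac_simps)
      moreover have "\<not> AG_perfect (residue_ring (int (p 2 ^ \<alpha> 2 * p 1 ^ \<alpha> 1 * p 3 ^ \<alpha> 3 * p 4 ^ \<alpha> 4)))"
        using nonperfect[OF pr(2) pr(1) pr(3) pr(4) ne(7) ne(4) ne(5) ne(2) ne(3) ne(6) _ al(1) al(3) al(4)] i2 \<open>i = 2\<close>
        by simp
      ultimately show False using perf by simp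
    next
      assume "i = 3"
      have "n = p 3 ^ \<alpha> 3 * p 1 ^ \<alpha> 1 * p 2 ^ \<alpha> 2 * p 4 ^ \<alpha> 4" using n4 by (simp add: ac_simps)
      moreover have "\<not> AG_perfect (residue_ring (int (p 3 ^ \<alpha> 3 * p 1 ^ \<alpha> 1 * p 2 ^ \<alpha> 2 * p 4 ^ \<alpha> 4)))"
        using nonperfect[OF pr(3) pr(1) pr(2) pr(4) ne(8) ne(10) ne(6) ne(1) ne(3) ne(5) _ al(1) al(2) al(4)] i2 \<open>i = 3\<close>
        by simp
      ultimately show False using perf by simp
    next
      assume "i = 4"
      have "n = p 4 ^ \<alpha> 4 * p 1 ^ \<alpha> 1 * p 2 ^ \<alpha> 2 * p 3 ^ \<alpha> 3" using n4 by (simp add: ac_simps)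
      moreover have "\<not> AG_perfect (residue_ring (int (p 4 ^ \<alpha> 4 * p 1 ^ \<alpha> 1 * p 2 ^ \<alpha> 2 * p 3 ^ \<alpha> 3)))"
        using nonperfect[OF pr(4) pr(1) pr(2) pr(3) ne(9) ne(11) ne(12) ne(1) ne(2) ne(4) _ al(1) al(2) al(3)] i2 \<open>i = 4\<close>
        by simp
      ultimately show False using perf by simp
    qed
  qed
next
  assume h: "\<forall>i\<in>{1..4}. \<alpha> i = 1"
  have "n = (\<Prod>i\<in>{1..4}. p i)" unfolding assms(4) using h by (intro prod.cong) simp_all
  thus "AG_perfect (residue_ring (int n))" using perfect_dir[OF assms(1) assms(2)] by simp
qed

end
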